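(* Let $N$ be an $r\times r$ indecomposable generalised Cartan matrix, and let $\mathfrak h$, $\alpha_i$, $Z$, $\mathcal A$, $F$, $v_1,\dots,v_r$ be as in the context. If Problem 2 has a solution, then $\ker F=Z$.
   Context: A generalised Cartan matrix is $N=[n(i,j)]_{1\le i,j\le r}$ with $n(i,j)\in\mathbb Z$, $n(i,i)=2$, $n(i,j)\le 0$ for $i\neq j$, and $n(i,j)=0\iff n(j,i)=0$; it is indecomposable if there is no partition of $\{1,\dots,r\}$ into two nonempty sets $I,J$ with $n(i,j)=0$ for all $i\in I,j\in J$. Let $s$ be the corank of $N$, $\mathfrak h$ the complex vector space with basis $H_1,\dots,H_{r+s}$, $\alpha_1,\dots,\alpha_r\in\mathfrak h^*$ linearly independent with $\alpha_j(H_i)=n(i,j)$ for $1\le i,j\le r$, and $Z=\bigcap_i\ker\alpha_i$. $\mathcal A$ is a complex commutative algebra, $\mathrm{Der}(\mathcal A)$ its Lie algebra of derivations; for $a\in\mathcal A$, $D\in\mathrm{Der}(\mathcal A)$, $aD$ is $b\mapsto aD(b)$. $F:\mathfrak h\to\mathrm{Der}(\mathcal A)$ is a Lie algebra homomorphism ($\mathfrak h$ abelian) and $v_1,\dots,v_r\in\mathcal A$ are invertible with $F(H)(v_i)=\alpha_i(H)v_i$ for all $H\in\mathfrak h$. Problem 2 has a solution means: there exist $\delta_1,\dots,\delta_r,\delta_{-1},\dots,\delta_{-r}\in\mathrm{Im}\,F$ such that, with $\mathbf X_i=v_i\delta_i$, $\mathbf X_{-i}=v_i^{-1}\delta_{-i}$,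 one has $[F(H_a),F(H_b)]=0$, $[\mathbf X_i,\mathbf X_{-i}]=F(H_i)$, $[\mathbf X_i,\mathbf X_{-j}]=0$ for $i\neq j$, and $[F(H_a),\mathbf X_{\pm j}]=\pm\alpha_j(H_a)\mathbf X_{\pm j}$. *)

theory Defs
  imports Complex_Main "Jordan_Normal_Form.DL_Rank"
begin

definition gen_cartan :: "nat \<Rightarrow> (nat \<Rightarrow> nat \<Rightarrow> int) \<Rightarrow> bool" where
  "gen_cartan r N \<longleftrightarrow>
     (\<forall>i<r. N i i = 2) \<and>
     (\<forall>i<r. \<forall>j<r. i \<noteq> j \<longrightarrow> N i j \<le> 0) \<and>
     (\<forall>i<r. \<forall>j<r. N i j = 0 \<longleftrightarrow> N j i = 0)"

definition indecomposable :: "nat \<Rightarrow> (nat \<Rightarrow> nat \<Rightarrow> int) \<Rightarrow> bool" where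
  "indecomposable r N \<longleftrightarrow>
     \<not> (\<exists>I J. I \<noteq> {} \<and> J \<noteq> {} \<and> I \<inter> J = {} \<and> I \<union> J = {..<r} \<and>
             (\<forall>i\<in>I. \<forall>j\<in>J. N i j = 0))"

definition cmat :: "nat \<Rightarrow> (nat \<Rightarrow> nat \<Rightarrow> int) \<Rightarrow> complex mat" where
  "cmat r N = mat r r (\<lambda>(i,j). of_int (N i j))"

definition corank :: "nat \<Rightarrow> (nat \<Rightarrow> nat \<Rightarrow> int) \<Rightarrow> nat" where
  "corank r N = r - vec_space.rank r (cmat r N)"

(* A complex commutative unital algebra: the ring structure is the type class
   comm_ring_1, the complex scalar multiplication is sc. *)
definition complex_comm_algebra :: "(complex \<Rightarrow> 'a::comm_ring_1 \<Rightarrow> 'a) \<Rightarrow> bool" where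
  "complex_comm_algebra sc \<longleftrightarrow>
     (\<forall>c a b. sc c (a + b) = sc c a + sc c b) \<and>
     (\<forall>c d a. sc (c + d) a = sc c a + sc d a) \<and>
     (\<forall>c d a. sc (c * d) a = sc c (sc d a)) \<and>
     (\<forall>a. sc 1 a = a) \<and>
     (\<forall>c a b. sc c (a * b) = sc c a * b)"

definition is_derivation :: "(complex \<Rightarrow> 'a::comm_ring_1 \<Rightarrow> 'a) \<Rightarrow> ('a \<Rightarrow> 'a) \<Rightarrow> bool" where
  "is_derivation sc D \<longleftrightarrow>
     (\<forall>a b. D (a + b) = D a + D b) \<and>
     (\<forall>c a. D (sc c a) = sc c (D a)) \<and>
     (\<forall>a b. D (a * b) = a * D b + D a * b)"

definition bracket :: "('a::ab_group_add \<Rightarrow> 'a) \<Rightarrow> ('a \<Rightarrow> 'a) \<Rightarrow> 'a \<Rightarrow> 'a" where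
  "bracket D E = (\<lambda>b. D (E b) - E (D b))"

definition lmult :: "'a::times \<Rightarrow> ('a \<Rightarrow> 'a) \<Rightarrow> 'a \<Rightarrow> 'a" where
  "lmult a D = (\<lambda>b. a * D b)"

(* The Cartan subalgebra h = C^(r+s), realised as coordinate vectors
   H :: nat \<Rightarrow> complex with H k = 0 for k \<ge> d (d = r + s).
   The basis element H_k (k < d) is the unit vector. *)
definition hspace :: "nat \<Rightarrow> (nat \<Rightarrow> complex) set" where
  "hspace d = {H. \<forall>k\<ge>d. H k = 0}"

definition hbasis :: "nat \<Rightarrow> nat \<Rightarrow> complex" where
  "hbasis k = (\<lambda>l. if l = k then 1 else 0)"

definition lin_fun :: "nat \<Rightarrow> (nat \<Rightarrow> complex) \<Rightarrow> (nat \<Rightarrow> complex) \<Rightarrow> complex" where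
  "lin_fun d a H = (\<Sum>k<d. H k * a k)"

(* a linear map F : h \<rightarrow> Der(A) which is a Lie algebra homomorphism (h abelian) *)
definition lie_hom_h :: "nat \<Rightarrow> (complex \<Rightarrow> 'a::comm_ring_1 \<Rightarrow> 'a)
     \<Rightarrow> ((nat \<Rightarrow> complex) \<Rightarrow> 'a \<Rightarrow> 'a) \<Rightarrow> bool" where
  "lie_hom_h d sc F \<longleftrightarrow>
     (\<forall>H\<in>hspace d. is_derivation sc (F H)) \<and>
     (\<forall>H\<in>hspace d. \<forall>H'\<in>hspace d. F (\<lambda>k. H k + H' k) = (\<lambda>b. F H b + F H' b)) \<and>
     (\<forall>c. \<forall>H\<in>hspace d. F (\<lambda>k. c * H k) = (\<lambda>b. sc c (F H b))) \<and>
     (\<forall>H\<in>hspace d. \<forall>H'\<in>hspace d. bracket (F H) (F H') = (\<lambda>b. 0))"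

end

theory Submission
  imports Defs
begin

declare sum_of_bool_eq[simp del] sum_mult_of_bool_eq[simp del] sum_of_bool_mult_eq[simp del]

lemma inj_transfer:
  fixes f :: "nat \<Rightarrow> nat \<Rightarrow> complex" and x :: "nat \<Rightarrow> complex"
  assumes T: "\<forall>c. (\<forall>l<n. (\<Sum>j<n. c j * f j l) = 0) \<longrightarrow> (\<forall>j<n. c j = 0)"
    and X: "\<forall>j<n. (\<Sum>l<n. f j l * x l) = 0"
  shows "\<forall>l<n. x l = 0"
proof -
  define M where "M = mat n n (\<lambda>(j,l). f j l)"
  have M: "M \<in> carrier_mat n n" unfolding M_def by simp
  have MT: "transpose_mat M \<in> carrier_mat n n" using M by simp
  have "det (transpose_mat M) \<noteq> 0"
  proof
    assume "det (transpose_mat M) = 0"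
    then obtain v where v: "v \<in> carrier_vec n" "v \<noteq> 0\<^sub>v n" "transpose_mat M *\<^sub>v v = 0\<^sub>v n"
      using det_0_iff_vec_prod_zero[OF MT] by auto
    have "\<forall>l<n. (\<Sum>j<n. v $ j * f j l) = 0"
    proof (intro allI impI)
      fix l assume l: "l < n"
      have "(transpose_mat M *\<^sub>v v) $ l = 0" using v(3) l by simp
      then show "(\<Sum>j<n. v $ j * f j l) = 0" using l v(1) M
        by (auto simp: M_def mult_mat_vec_def scalar_prod_def lessThan_atLeast0 mult.commute)
    qed
    then have "\<forall>j<n. v $ j = 0" using T by blast
    then have "v = 0\<^sub>v n" using v(1) by (intro eq_vecI) auto
    then show False using v(2) by simp
  qed
  then have dM: "det M \<noteq> 0" using det_transpose[OF M] by simp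
  have "M *\<^sub>v vec n x = 0\<^sub>v n"
  proof (rule eq_vecI)
    fix j assume "j < dim_vec (0\<^sub>v n :: complex vec)"
    then have j: "j < n" by simp
    show "(M *\<^sub>v vec n x) $ j = 0\<^sub>v n $ j" using X j M
      by (auto simp: M_def mult_mat_vec_def scalar_prod_def lessThan_atLeast0)
  qed (use M in simp)
  then have "vec n x = 0\<^sub>v n" using det_0_iff_vec_prod_zero[OF M] dM vec_carrier by blast
  then show ?thesis by (metis index_vec index_zero_vec(1))
qed

lemma rank_lower:
  fixes N :: "nat \<Rightarrow> nat \<Rightarrow> int"
  assumes T: "\<forall>c::nat\<Rightarrow>complex. (\<forall>i<r. (\<Sum>j<r. of_int (N i j) * c j) + (\<Sum>j<r. c j) = 0) \<longrightarrow> (\<forall>j<r. c j = 0)"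
  shows "corank r N \<le> 1"
proof -
  define J :: "complex mat" where "J = mat r r (\<lambda>_. 1)"
  have C: "cmat r N \<in> carrier_mat r r" by (simp add: cmat_def)
  have JC: "J \<in> carrier_mat r r" by (simp add: J_def)
  have S: "cmat r N + J \<in> carrier_mat r r" using C JC by simp
  have "det (cmat r N + J) \<noteq> 0"
  proof
    assume "det (cmat r N + J) = 0"
    then obtain v where v: "v \<in> carrier_vec r" "v \<noteq> 0\<^sub>v r" "(cmat r N + J) *\<^sub>v v = 0\<^sub>v r"
      using det_0_iff_vec_prod_zero[OF S] by auto
    have "\<forall>i<r. (\<Sum>j<r. of_int (N i j) * v $ j) + (\<Sum>j<r. v $ j) = 0"
    proof (intro allI impI)
      fix i assume i: "i < r"
      have "((cmat r N + J) *\<^sub>v v) $ i = 0" using v(3) i by simp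
      then show "(\<Sum>j<r. of_int (N i j) * v $ j) + (\<Sum>j<r. v $ j) = 0" using i v(1)
        by (auto simp: cmat_def J_def mult_mat_vec_def scalar_prod_def lessThan_atLeast0
            distrib_right sum.distrib)
    qed
    then have "\<forall>j<r. v $ j = 0" using T by blast
    then have "v = 0\<^sub>v r" using v(1) by (intro eq_vecI) auto
    then show False using v(2) by simp
  qed
  then have r1: "vec_space.rank r (cmat r N + J) = r" using vec_space.det_rank_iff[OF S] by simp
  have r2: "vec_space.rank r (cmat r N + J) \<le> vec_space.rank r (cmat r N) + vec_space.rank r J"
    using vec_space.rank_subadditive[OF C JC] .
  have r3: "vec_space.rank r J \<le> 1"
    by (rule vec_space.rank_le_1_product_entries[OF JC, of "\<lambda>_. 1" "\<lambda>_. 1"]) (auto simp: J_def)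
  show ?thesis unfolding corank_def using r1 r2 r3 by linarith
qed

lemma rank_kernel:
  fixes N :: "nat \<Rightarrow> nat \<Rightarrow> int"
  assumes "corank r N \<noteq> 0"
  shows "\<exists>c::nat\<Rightarrow>complex. (\<forall>i<r. (\<Sum>j<r. of_int (N i j) * c j) = 0) \<and> (\<exists>j<r. c j \<noteq> 0)"
proof -
  have C: "cmat r N \<in> carrier_mat r r" by (simp add: cmat_def)
  have "vec_space.rank r (cmat r N) \<noteq> r" using assms unfolding corank_def by simp
  then have "det (cmat r N) = 0" using vec_space.det_rank_iff[OF C] by simp
  then obtain v where v: "v \<in> carrier_vec r" "v \<noteq> 0\<^sub>v r" "cmat r N *\<^sub>v v = 0\<^sub>v r"
    using det_0_iff_vec_prod_zero[OF C] by auto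
  have "\<forall>i<r. (\<Sum>j<r. of_int (N i j) * v $ j) = 0"
  proof (intro allI impI)
    fix i assume i: "i < r"
    have "(cmat r N *\<^sub>v v) $ i = 0" using v(3) i by simp
    then show "(\<Sum>j<r. of_int (N i j) * v $ j) = 0" using i v(1)
      by (auto simp: cmat_def mult_mat_vec_def scalar_prod_def lessThan_atLeast0)
  qed
  moreover have "\<exists>j<r. v $ j \<noteq> 0"
  proof (rule ccontr)
    assume "\<not> ?thesis"
    then have "v = 0\<^sub>v r" using v(1) by (intro eq_vecI) auto
    then show False using v(2) by simp
  qed
  ultimately show ?thesis by blast
qed


lemma quad_identity:
  fixes P :: "nat \<Rightarrow> nat \<Rightarrow> bool" and c :: "nat \<Rightarrow> real" and N :: "nat \<Rightarrow> nat \<Rightarrow> int"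
  assumes NP: "\<forall>i<r. \<forall>j<r. N i j = (if i = j then 2 else 0) - of_bool (P i j) - of_bool (P j i)"
  shows "(\<Sum>i<r. c i * (\<Sum>j<r. of_int (N i j) * c j)) =
     (\<Sum>i<r. \<Sum>j<r. of_bool (P i j) * (c i - c j)\<^sup>2)
     + (\<Sum>i<r. (1 - (\<Sum>j<r. of_bool (P i j))) * (c i)\<^sup>2)
     + (\<Sum>j<r. (1 - (\<Sum>i<r. of_bool (P i j))) * (c j)\<^sup>2)"
proof -
  define S where "S = (\<Sum>i<r. \<Sum>j<r. of_bool (P i j) * (c i * c j))"
  have e1: "(\<Sum>j<r. of_int (N i j) * c j) = 2 * c i - (\<Sum>j<r. of_bool (P i j) * c j) - (\<Sum>j<r. of_bool (P j i) * c j)"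
    if i: "i < r" for i
  proof -
    have "(\<Sum>j<r. of_int (N i j) * c j) = (\<Sum>j<r. (if i = j then 2 * c j else 0) - of_bool (P i j) * c j - of_bool (P j i) * c j)"
    proof (intro sum.cong refl)
      fix j assume j: "j \<in> {..<r}"
      have "real_of_int (N i j) = real_of_int ((if i = j then 2 else 0) - of_bool (P i j) - of_bool (P j i))"
        using NP i j by simp
      also have "\<dots> = (if i = j then 2 else 0) - of_bool (P i j) - of_bool (P j i)" by simp
      finally have eq: "real_of_int (N i j) = (if i = j then 2 else 0) - of_bool (P i j) - of_bool (P j i)" .
      show "real_of_int (N i j) * c j = (if i = j then 2 * c j else 0) - of_bool (P i j) * c j - of_bool (P j i) * c j"
        unfolding eq by (simp add: algebra_simps)
    qed
    also have "\<dots> = 2 * c i - (\<Sum>j<r. of_bool (P i j) * c j) - (\<Sum>j<r. of_bool (P j i) * c j)"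
      using i by (simp add: sum_subtractf)
    finally show ?thesis .
  qed
  have "(\<Sum>i<r. c i * (\<Sum>j<r. of_int (N i j) * c j)) =
     (\<Sum>i<r. 2 * (c i)\<^sup>2 - (\<Sum>j<r. of_bool (P i j) * (c i * c j)) - (\<Sum>j<r. of_bool (P j i) * (c j * c i)))"
  proof (intro sum.cong refl)
    fix i assume "i \<in> {..<r}"
    then have "c i * (\<Sum>j<r. of_int (N i j) * c j) = c i * (2 * c i - (\<Sum>j<r. of_bool (P i j) * c j) - (\<Sum>j<r. of_bool (P j i) * c j))"
      using e1 by simp
    also have "\<dots> = 2 * (c i)\<^sup>2 - (\<Sum>j<r. of_bool (P i j) * (c i * c j)) - (\<Sum>j<r. of_bool (P j i) * (c j * c i))"
      by (simp add: algebra_simps power2_eq_square sum_distrib_left)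
    finally show "c i * (\<Sum>j<r. of_int (N i j) * c j) = 2 * (c i)\<^sup>2 - (\<Sum>j<r. of_bool (P i j) * (c i * c j)) - (\<Sum>j<r. of_bool (P j i) * (c j * c i))" .
  qed
  also have "\<dots> = 2 * (\<Sum>i<r. (c i)\<^sup>2) - S - S"
  proof -
    have sw: "(\<Sum>i<r. \<Sum>j<r. of_bool (P j i) * (c j * c i)) = S" unfolding S_def by (rule sum.swap)
    have "(\<Sum>i<r. 2 * (c i)\<^sup>2 - (\<Sum>j<r. of_bool (P i j) * (c i * c j)) - (\<Sum>j<r. of_bool (P j i) * (c j * c i)))
        = 2 * (\<Sum>i<r. (c i)\<^sup>2) - (\<Sum>i<r. \<Sum>j<r. of_bool (P i j) * (c i * c j)) - (\<Sum>i<r. \<Sum>j<r. of_bool (P j i) * (c j * c i))"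
      by (simp only: sum_subtractf sum_distrib_left)
    then show ?thesis unfolding sw S_def .
  qed
  finally have L: "(\<Sum>i<r. c i * (\<Sum>j<r. of_int (N i j) * c j)) = 2 * (\<Sum>i<r. (c i)\<^sup>2) - 2 * S" by simp
  have R1: "(\<Sum>i<r. \<Sum>j<r. of_bool (P i j) * (c i - c j)\<^sup>2) =
      (\<Sum>i<r. (\<Sum>j<r. of_bool (P i j)) * (c i)\<^sup>2) + (\<Sum>j<r. (\<Sum>i<r. of_bool (P i j)) * (c j)\<^sup>2) - 2 * S"
  proof -
    have "(\<Sum>i<r. \<Sum>j<r. of_bool (P i j) * (c i - c j)\<^sup>2) =
       (\<Sum>i<r. \<Sum>j<r. of_bool (P i j) * (c i)\<^sup>2 + of_bool (P i j) * (c j)\<^sup>2 - 2 * (of_bool (P i j) * (c i * c j)))"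
      by (intro sum.cong refl) (simp add: power2_eq_square algebra_simps)
    also have "\<dots> = (\<Sum>i<r. \<Sum>j<r. of_bool (P i j) * (c i)\<^sup>2) + (\<Sum>i<r. \<Sum>j<r. of_bool (P i j) * (c j)\<^sup>2) - 2 * S"
      unfolding S_def by (simp add: sum.distrib sum_subtractf sum_distrib_left)
    also have "(\<Sum>i<r. \<Sum>j<r. of_bool (P i j) * (c j)\<^sup>2) = (\<Sum>j<r. \<Sum>i<r. of_bool (P i j) * (c j)\<^sup>2)"
      by (rule sum.swap)
    finally show ?thesis by (simp add: sum_distrib_right)
  qed
  have R2: "(\<Sum>i<r. (1 - (\<Sum>j<r. of_bool (P i j))) * (c i)\<^sup>2) = (\<Sum>i<r. (c i)\<^sup>2) - (\<Sum>i<r. (\<Sum>j<r. of_bool (P i j)) * (c i)\<^sup>2)"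
    by (simp add: algebra_simps sum_subtractf)
  have R3: "(\<Sum>j<r. (1 - (\<Sum>i<r. of_bool (P i j))) * (c j)\<^sup>2) = (\<Sum>j<r. (c j)\<^sup>2) - (\<Sum>j<r. (\<Sum>i<r. of_bool (P i j)) * (c j)\<^sup>2)"
    by (simp add: algebra_simps sum_subtractf)
  show ?thesis unfolding L R1 R2 R3 by simp
qed

lemma sum_bool_le1:
  fixes P :: "nat \<Rightarrow> bool"
  assumes "\<forall>j<r. \<forall>k<r. P j \<and> P k \<longrightarrow> j = k"
  shows "(\<Sum>j<r. of_bool (P j) :: real) = (if \<exists>j<r. P j then 1 else 0)"
proof (cases "\<exists>j<r. P j")
  case True
  then obtain j0 where j0: "j0 < r" "P j0" by blast
  have "(\<Sum>j<r. of_bool (P j) :: real) = (\<Sum>j<r. if j = j0 then 1 else 0)"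
    using assms j0 by (intro sum.cong refl) auto
  also have "\<dots> = 1" using j0 by simp
  finally show ?thesis using True by simp
next
  case False
  then show ?thesis by simp
qed

lemma quad_props:
  fixes P :: "nat \<Rightarrow> nat \<Rightarrow> bool" and c :: "nat \<Rightarrow> real" and N :: "nat \<Rightarrow> nat \<Rightarrow> int"
  assumes NP: "\<forall>i<r. \<forall>j<r. N i j = (if i = j then 2 else 0) - of_bool (P i j) - of_bool (P j i)"
    and outu: "\<forall>i<r. \<forall>j<r. \<forall>k<r. P i j \<and> P i k \<longrightarrow> j = k"
    and inu: "\<forall>i<r. \<forall>j<r. \<forall>k<r. P i k \<and> P j k \<longrightarrow> i = j"
  shows "(\<Sum>i<r. c i * (\<Sum>j<r. of_int (N i j) * c j)) \<ge> 0"
    and "(\<Sum>i<r. c i * (\<Sum>j<r. of_int (N i j) * c j)) = 0 \<Longrightarrow>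
       (\<forall>i<r. \<forall>j<r. P i j \<longrightarrow> c i = c j) \<and> (\<forall>i<r. \<not> (\<exists>j<r. P i j) \<longrightarrow> c i = 0)
       \<and> (\<forall>j<r. \<not> (\<exists>i<r. P i j) \<longrightarrow> c j = 0)"
proof -
  let ?Q = "(\<Sum>i<r. c i * (\<Sum>j<r. of_int (N i j) * c j))"
  define T1 where "T1 = (\<Sum>i<r. \<Sum>j<r. of_bool (P i j) * (c i - c j)\<^sup>2)"
  define T2 where "T2 = (\<Sum>i<r. (1 - (\<Sum>j<r. of_bool (P i j))) * (c i)\<^sup>2)"
  define T3 where "T3 = (\<Sum>j<r. (1 - (\<Sum>i<r. of_bool (P i j))) * (c j)\<^sup>2)"
  have Q: "?Q = T1 + T2 + T3" unfolding T1_def T2_def T3_def by (rule quad_identity[OF NP])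
  have o: "(\<Sum>j<r. of_bool (P i j) :: real) = (if \<exists>j<r. P i j then 1 else 0)" if "i < r" for i
    by (rule sum_bool_le1) (use outu that in blast)
  have n: "(\<Sum>i<r. of_bool (P i j) :: real) = (if \<exists>i<r. P i j then 1 else 0)" if "j < r" for j
    by (rule sum_bool_le1) (use inu that in blast)
  have T2': "T2 = (\<Sum>i<r. (if \<exists>j<r. P i j then 0 else 1) * (c i)\<^sup>2)"
    unfolding T2_def by (intro sum.cong refl) (simp add: o, blast)
  have T3': "T3 = (\<Sum>j<r. (if \<exists>i<r. P i j then 0 else 1) * (c j)\<^sup>2)"
    unfolding T3_def by (intro sum.cong refl) (simp add: n, blast)
  have n1: "T1 \<ge> 0" unfolding T1_def by (intro sum_nonneg) auto
  have n2: "T2 \<ge> 0" unfolding T2' by (intro sum_nonneg mult_nonneg_nonneg) simp_all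
  have n3: "T3 \<ge> 0" unfolding T3' by (intro sum_nonneg mult_nonneg_nonneg) simp_all
  show "?Q \<ge> 0" using Q n1 n2 n3 by simp
  assume "?Q = 0"
  then have z: "T1 = 0" "T2 = 0" "T3 = 0" using Q n1 n2 n3 by linarith+
  have "\<forall>i<r. \<forall>j<r. P i j \<longrightarrow> c i = c j"
  proof (intro allI impI)
    fix i j assume ij: "i < r" "j < r" "P i j"
    have "(\<Sum>j<r. of_bool (P i j) * (c i - c j)\<^sup>2) = 0"
      using z(1) unfolding T1_def
      by (subst (asm) sum_nonneg_eq_0_iff) (auto intro!: sum_nonneg simp: ij)
    then have "of_bool (P i j) * (c i - c j)\<^sup>2 = 0"
      by (subst (asm) sum_nonneg_eq_0_iff) (auto simp: ij)
    then show "c i = c j" using ij by simp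
  qed
  moreover have "\<forall>i<r. \<not> (\<exists>j<r. P i j) \<longrightarrow> c i = 0"
  proof (intro allI impI)
    fix i assume i: "i < r" "\<not> (\<exists>j<r. P i j)"
    have "\<forall>x\<in>{..<r}. (if \<exists>j<r. P x j then 0 else 1) * (c x)\<^sup>2 = 0"
      using z(2) unfolding T2' by (subst (asm) sum_nonneg_eq_0_iff) auto
    then have "(if \<exists>j<r. P i j then 0 else 1) * (c i)\<^sup>2 = 0" using i by blast
    then show "c i = 0" using i by simp
  qed
  moreover have "\<forall>j<r. \<not> (\<exists>i<r. P i j) \<longrightarrow> c j = 0"
  proof (intro allI impI)
    fix j assume j: "j < r" "\<not> (\<exists>i<r. P i j)"
    have "\<forall>x\<in>{..<r}. (if \<exists>i<r. P i x then 0 else 1) * (c x)\<^sup>2 = 0"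
      using z(3) unfolding T3' by (subst (asm) sum_nonneg_eq_0_iff) auto
    then have "(if \<exists>i<r. P i j then 0 else 1) * (c j)\<^sup>2 = 0" using j by blast
    then show "c j = 0" using j by simp
  qed
  ultimately show "(\<forall>i<r. \<forall>j<r. P i j \<longrightarrow> c i = c j) \<and> (\<forall>i<r. \<not> (\<exists>j<r. P i j) \<longrightarrow> c i = 0)
       \<and> (\<forall>j<r. \<not> (\<exists>i<r. P i j) \<longrightarrow> c j = 0)" by blast
qed

lemma indec_const:
  fixes P :: "nat \<Rightarrow> nat \<Rightarrow> bool" and c :: "nat \<Rightarrow> 'b" and N :: "nat \<Rightarrow> nat \<Rightarrow> int"
  assumes NP: "\<forall>i<r. \<forall>j<r. N i j = (if i = j then 2 else 0) - of_bool (P i j) - of_bool (P j i)"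
    and indec: "indecomposable r N"
    and C: "\<forall>i<r. \<forall>j<r. P i j \<longrightarrow> c i = c j"
    and r: "0 < r"
  shows "\<forall>i<r. c i = c 0"
proof (rule ccontr)
  assume nt: "\<not> (\<forall>i<r. c i = c 0)"
  define I where "I = {i. i < r \<and> c i = c 0}"
  define J where "J = {i. i < r \<and> c i \<noteq> c 0}"
  have "I \<noteq> {}" using r unfolding I_def by auto
  moreover have "J \<noteq> {}" using nt unfolding J_def by auto
  moreover have "I \<inter> J = {}" "I \<union> J = {..<r}" unfolding I_def J_def by auto
  moreover have "\<forall>i\<in>I. \<forall>j\<in>J. N i j = 0"
  proof (intro ballI)
    fix i j assume "i \<in> I" "j \<in> J"
    then have ij: "i < r" "j < r" "c i = c 0" "c j \<noteq> c 0" unfolding I_def J_def by auto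
    then have "i \<noteq> j" by auto
    moreover have "\<not> P i j" "\<not> P j i" using C ij by metis+
    ultimately show "N i j = 0" using NP ij by simp
  qed
  ultimately show False using indec unfolding indecomposable_def by blast
qed


lemma real_kernel_NJ:
  fixes P :: "nat \<Rightarrow> nat \<Rightarrow> bool" and c :: "nat \<Rightarrow> real" and N :: "nat \<Rightarrow> nat \<Rightarrow> int"
  assumes NP: "\<forall>i<r. \<forall>j<r. N i j = (if i = j then 2 else 0) - of_bool (P i j) - of_bool (P j i)"
    and outu: "\<forall>i<r. \<forall>j<r. \<forall>k<r. P i j \<and> P i k \<longrightarrow> j = k"
    and inu: "\<forall>i<r. \<forall>j<r. \<forall>k<r. P i k \<and> P j k \<longrightarrow> i = j"
    and indec: "indecomposable r N"
    and E: "\<forall>i<r. (\<Sum>j<r. of_int (N i j) * c j) + (\<Sum>j<r. c j) = 0"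
  shows "\<forall>j<r. c j = 0"
proof (cases "r = 0")
  case True then show ?thesis by simp
next
  case False
  let ?Q = "(\<Sum>i<r. c i * (\<Sum>j<r. of_int (N i j) * c j))"
  define S where "S = (\<Sum>j<r. c j)"
  have "?Q = (\<Sum>i<r. c i * (- S))"
  proof (intro sum.cong refl)
    fix i assume "i \<in> {..<r}"
    then have "(\<Sum>j<r. of_int (N i j) * c j) + S = 0" using E unfolding S_def by simp
    then have "(\<Sum>j<r. of_int (N i j) * c j) = - S" by linarith
    then show "c i * (\<Sum>j<r. of_int (N i j) * c j) = c i * (- S)" by simp
  qed
  also have "\<dots> = (\<Sum>i<r. c i) * (- S)" by (rule sum_distrib_right[symmetric])
  also have "\<dots> = - (S * S)" unfolding S_def by simp
  finally have Qe: "?Q = - (S * S)" .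
  have "?Q \<ge> 0" by (rule quad_props(1)[OF NP outu inu])
  then have "S * S \<le> 0" using Qe by linarith
  then have s0: "S = 0" by (metis mult_eq_0_iff not_square_less_zero order_less_le)
  then have "?Q = 0" using Qe by simp
  then have "\<forall>i<r. \<forall>j<r. P i j \<longrightarrow> c i = c j" using quad_props(2)[OF NP outu inu] by blast
  then have cst: "\<forall>i<r. c i = c 0" using indec_const[OF NP indec] False by blast
  then have "(\<Sum>j<r. c j) = (\<Sum>j<r. c 0)" by (intro sum.cong refl) (metis lessThan_iff)
  then have "real r * c 0 = 0" using s0 unfolding S_def by simp
  then have "c 0 = 0" using False by simp
  then show ?thesis using cst by metis
qed

lemma complex_kernel_NJ:
  fixes P :: "nat \<Rightarrow> nat \<Rightarrow> bool" and N :: "nat \<Rightarrow> nat \<Rightarrow> int"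
  assumes NP: "\<forall>i<r. \<forall>j<r. N i j = (if i = j then 2 else 0) - of_bool (P i j) - of_bool (P j i)"
    and outu: "\<forall>i<r. \<forall>j<r. \<forall>k<r. P i j \<and> P i k \<longrightarrow> j = k"
    and inu: "\<forall>i<r. \<forall>j<r. \<forall>k<r. P i k \<and> P j k \<longrightarrow> i = j"
    and indec: "indecomposable r N"
  shows "\<forall>c::nat\<Rightarrow>complex. (\<forall>i<r. (\<Sum>j<r. of_int (N i j) * c j) + (\<Sum>j<r. c j) = 0) \<longrightarrow> (\<forall>j<r. c j = 0)"
proof (intro allI impI)
  fix c :: "nat \<Rightarrow> complex" and j
  assume E: "\<forall>i<r. (\<Sum>j<r. of_int (N i j) * c j) + (\<Sum>j<r. c j) = 0" and j: "j < r"
  have ER: "\<forall>i<r. (\<Sum>j<r. of_int (N i j) * Re (c j)) + (\<Sum>j<r. Re (c j)) = 0"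
  proof (intro allI impI)
    fix i assume "i < r"
    then have "Re ((\<Sum>j<r. of_int (N i j) * c j) + (\<Sum>j<r. c j)) = 0" using E by simp
    then show "(\<Sum>j<r. of_int (N i j) * Re (c j)) + (\<Sum>j<r. Re (c j)) = 0" by (simp add: Re_sum)
  qed
  have EI: "\<forall>i<r. (\<Sum>j<r. of_int (N i j) * Im (c j)) + (\<Sum>j<r. Im (c j)) = 0"
  proof (intro allI impI)
    fix i assume "i < r"
    then have "Im ((\<Sum>j<r. of_int (N i j) * c j) + (\<Sum>j<r. c j)) = 0" using E by simp
    then show "(\<Sum>j<r. of_int (N i j) * Im (c j)) + (\<Sum>j<r. Im (c j)) = 0" by (simp add: Im_sum)
  qed
  have "Re (c j) = 0" using real_kernel_NJ[OF NP outu inu indec ER] j by blast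
  moreover have "Im (c j) = 0" using real_kernel_NJ[OF NP outu inu indec EI] j by blast
  ultimately show "c j = 0" by (simp add: complex_eq_iff)
qed

lemma kernel_cycle:
  fixes P :: "nat \<Rightarrow> nat \<Rightarrow> bool" and N :: "nat \<Rightarrow> nat \<Rightarrow> int"
  assumes NP: "\<forall>i<r. \<forall>j<r. N i j = (if i = j then 2 else 0) - of_bool (P i j) - of_bool (P j i)"
    and outu: "\<forall>i<r. \<forall>j<r. \<forall>k<r. P i j \<and> P i k \<longrightarrow> j = k"
    and inu: "\<forall>i<r. \<forall>j<r. \<forall>k<r. P i k \<and> P j k \<longrightarrow> i = j"
    and indec: "indecomposable r N"
    and cr: "corank r N \<noteq> 0"
  shows "\<forall>j<r. \<exists>i<r. P i j"
proof -
  obtain z :: "nat \<Rightarrow> complex" where z: "\<forall>i<r. (\<Sum>j<r. of_int (N i j) * z j) = 0" "\<exists>j<r. z j \<noteq> 0"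
    using rank_kernel[OF cr] by blast
  have "\<exists>c :: nat \<Rightarrow> real. (\<forall>i<r. (\<Sum>j<r. of_int (N i j) * c j) = 0) \<and> (\<exists>j<r. c j \<noteq> 0)"
  proof -
    have ER: "\<forall>i<r. (\<Sum>j<r. of_int (N i j) * Re (z j)) = 0"
    proof (intro allI impI)
      fix i assume "i < r"
      then have "Re (\<Sum>j<r. of_int (N i j) * z j) = 0" using z by simp
      then show "(\<Sum>j<r. of_int (N i j) * Re (z j)) = 0" by (simp add: Re_sum)
    qed
    have EI: "\<forall>i<r. (\<Sum>j<r. of_int (N i j) * Im (z j)) = 0"
    proof (intro allI impI)
      fix i assume "i < r"
      then have "Im (\<Sum>j<r. of_int (N i j) * z j) = 0" using z by simp
      then show "(\<Sum>j<r. of_int (N i j) * Im (z j)) = 0" by (simp add: Im_sum)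
    qed
    obtain j where j: "j < r" "z j \<noteq> 0" using z by blast
    then have "Re (z j) \<noteq> 0 \<or> Im (z j) \<noteq> 0" by (simp add: complex_eq_iff)
    then show ?thesis
    proof
      assume "Re (z j) \<noteq> 0"
      then show ?thesis using ER j by (intro exI[of _ "\<lambda>j. Re (z j)"]) blast
    next
      assume "Im (z j) \<noteq> 0"
      then show ?thesis using EI j by (intro exI[of _ "\<lambda>j. Im (z j)"]) blast
    qed
  qed
  then obtain c :: "nat \<Rightarrow> real" where c: "\<forall>i<r. (\<Sum>j<r. of_int (N i j) * c j) = 0" "\<exists>j<r. c j \<noteq> 0"
    by blast
  have "(\<Sum>i<r. c i * (\<Sum>j<r. of_int (N i j) * c j)) = 0" using c(1) by simp
  then have pr: "(\<forall>i<r. \<forall>j<r. P i j \<longrightarrow> c i = c j) \<and> (\<forall>i<r. \<not> (\<exists>j<r. P i j) \<longrightarrow> c i = 0)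
       \<and> (\<forall>j<r. \<not> (\<exists>i<r. P i j) \<longrightarrow> c j = 0)" using quad_props(2)[OF NP outu inu] by blast
  obtain j0 where j0: "j0 < r" "c j0 \<noteq> 0" using c(2) by blast
  then have r: "0 < r" by simp
  have cst: "\<forall>i<r. c i = c 0" using indec_const[OF NP indec _ r] pr by blast
  show ?thesis
  proof (intro allI impI)
    fix j assume "j < r"
    then have "c j \<noteq> 0" using cst j0 by metis
    then show "\<exists>i<r. P i j" using pr \<open>j < r\<close> by blast
  qed
qed



locale alg_setting =
  fixes d r :: nat and acoef :: "nat \<Rightarrow> nat \<Rightarrow> complex"
    and sc :: "complex \<Rightarrow> 'a::comm_ring_1 \<Rightarrow> 'a"
    and F :: "(nat \<Rightarrow> complex) \<Rightarrow> 'a \<Rightarrow> 'a"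
    and v vinv :: "nat \<Rightarrow> 'a"
  assumes alg: "complex_comm_algebra sc"
    and Fhom: "lie_hom_h d sc F"
    and v_inv: "\<forall>i<r. v i * vinv i = 1"
    and v_eig: "\<forall>H\<in>hspace d. \<forall>i<r. F H (v i) = sc (lin_fun d (acoef i) H) (v i)"
begin

abbreviation al :: "nat \<Rightarrow> (nat \<Rightarrow> complex) \<Rightarrow> complex" where
  "al j X \<equiv> lin_fun d (acoef j) X"

lemma sc_add: "sc c (a + b) = sc c a + sc c b" using alg unfolding complex_comm_algebra_def by blast
lemma sc_addc: "sc (c + c') a = sc c a + sc c' a" using alg unfolding complex_comm_algebra_def by blast
lemma sc_mult: "sc (c * c') a = sc c (sc c' a)" using alg unfolding complex_comm_algebra_def by blast
lemma sc_one: "sc 1 a = a" using alg unfolding complex_comm_algebra_def by blast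
lemma sc_tl: "sc c a * b = sc c (a * b)" using alg unfolding complex_comm_algebra_def by metis
lemma sc_tr: "a * sc c b = sc c (a * b)" using sc_tl[of c b a] by (simp add: mult.commute)
lemma sc_zero_l: "sc 0 a = 0" using sc_addc[of 0 0 a] by simp
lemma sc_zero_r: "sc c 0 = 0" using sc_add[of c 0 0] by simp
lemma sc_neg_l: "sc (- c) a = - sc c a"
proof -
  have "sc c a + sc (- c) a = 0" using sc_addc[of c "-c" a] sc_zero_l by simp
  then show ?thesis by (metis neg_eq_iff_add_eq_0)
qed
lemma sc_neg_r: "sc c (- a) = - sc c a"
proof -
  have "sc c a + sc c (- a) = 0" using sc_add[of c a "-a"] sc_zero_r by simp
  then show ?thesis by (metis neg_eq_iff_add_eq_0)
qed
lemma sc_diff_r: "sc c (a - b) = sc c a - sc c b" using sc_add[of c a "-b"] sc_neg_r[of c b] by simp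

lemma sc_cancel:
  assumes "i < r" and "sc c (v i) = sc c' (v i)" shows "c = c'"
proof (rule ccontr)
  assume ne: "c \<noteq> c'"
  have "sc c (v i) * vinv i = sc c' (v i) * vinv i" using assms by simp
  then have "sc c 1 = sc c' 1" using v_inv assms(1) by (simp add: sc_tl)
  then have "sc (c - c') 1 = 0" using sc_addc[of c "-c'" 1] sc_neg_l by simp
  then have "sc (inverse (c - c')) (sc (c - c') 1) = 0" by (simp add: sc_zero_r)
  then have "(1::'a) = 0" using ne by (simp add: sc_mult[symmetric] sc_one)
  then show False by simp
qed

lemma hs_add: "X \<in> hspace d \<Longrightarrow> Y \<in> hspace d \<Longrightarrow> (\<lambda>k. X k + Y k) \<in> hspace d"
  by (simp add: hspace_def)
lemma hs_scale: "X \<in> hspace d \<Longrightarrow> (\<lambda>k. c * X k) \<in> hspace d"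
  by (simp add: hspace_def)
lemma hs_lin: "X \<in> hspace d \<Longrightarrow> Y \<in> hspace d \<Longrightarrow> (\<lambda>k. c * X k + c' * Y k) \<in> hspace d"
  by (simp add: hspace_def)
lemma hs_basis: "i < d \<Longrightarrow> hbasis i \<in> hspace d"
  by (simp add: hspace_def hbasis_def)
lemma hs_zero: "(\<lambda>k. 0) \<in> hspace d" by (simp add: hspace_def)

lemma al_lin: "al j (\<lambda>k. c * X k + c' * Y k) = c * al j X + c' * al j Y"
  by (simp add: lin_fun_def algebra_simps sum.distrib sum_distrib_left)
lemma al_scale: "al j (\<lambda>k. c * X k) = c * al j X"
  by (simp add: lin_fun_def algebra_simps sum_distrib_left)
lemma al_diff: "al j (\<lambda>k. X k - Y k) = al j X - al j Y"
  by (simp add: lin_fun_def algebra_simps sum_subtractf)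
lemma al_zero: "al j (\<lambda>k. 0) = 0" by (simp add: lin_fun_def)

lemma F_add: "X \<in> hspace d \<Longrightarrow> Y \<in> hspace d \<Longrightarrow> F (\<lambda>k. X k + Y k) b = F X b + F Y b"
  using Fhom unfolding lie_hom_h_def by metis
lemma F_scale: "X \<in> hspace d \<Longrightarrow> F (\<lambda>k. c * X k) b = sc c (F X b)"
  using Fhom unfolding lie_hom_h_def by metis
lemma F_lin: "X \<in> hspace d \<Longrightarrow> Y \<in> hspace d \<Longrightarrow> F (\<lambda>k. c * X k + c' * Y k) b = sc c (F X b) + sc c' (F Y b)"
  using F_add[OF hs_scale hs_scale] F_scale by simp
lemma F_zero: "F (\<lambda>k. 0) b = 0"
  using F_scale[OF hs_zero, of 0 b] sc_zero_l by simp
lemma F_diff: "X \<in> hspace d \<Longrightarrow> Y \<in> hspace d \<Longrightarrow> F (\<lambda>k. X k - Y k) b = F X b - F Y b"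
  using F_lin[of X Y 1 "-1" b] by (simp add: sc_one sc_neg_l)
lemma F_der: "X \<in> hspace d \<Longrightarrow> is_derivation sc (F X)"
  using Fhom unfolding lie_hom_h_def by blast
lemma F_comm: "X \<in> hspace d \<Longrightarrow> Y \<in> hspace d \<Longrightarrow> F X (F Y b) = F Y (F X b)"
proof -
  assume "X \<in> hspace d" "Y \<in> hspace d"
  then have "bracket (F X) (F Y) = (\<lambda>b. 0)" using Fhom unfolding lie_hom_h_def by blast
  then have "bracket (F X) (F Y) b = 0" by simp
  then show ?thesis unfolding bracket_def by simp
qed
lemma der_mult: "X \<in> hspace d \<Longrightarrow> F X (a * b) = a * F X b + F X a * b"
  using F_der unfolding is_derivation_def by blast
lemma der_add: "X \<in> hspace d \<Longrightarrow> F X (a + b) = F X a + F X b"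
  using F_der unfolding is_derivation_def by blast
lemma der_one: "X \<in> hspace d \<Longrightarrow> F X 1 = 0"
  using der_mult[of X 1 1] by simp
lemma F_vinv: "X \<in> hspace d \<Longrightarrow> i < r \<Longrightarrow> F X (vinv i) = sc (- al i X) (vinv i)"
proof -
  assume X: "X \<in> hspace d" and i: "i < r"
  have "F X (v i * vinv i) = 0" using v_inv i der_one[OF X] by simp
  then have "v i * F X (vinv i) + sc (al i X) (v i) * vinv i = 0" using der_mult[OF X] v_eig X i by simp
  then have "v i * F X (vinv i) = - sc (al i X) 1" using v_inv i by (simp add: sc_tl eq_neg_iff_add_eq_0)
  then have "vinv i * (v i * F X (vinv i)) = vinv i * (- sc (al i X) 1)" by simp
  then show ?thesis using v_inv i by (simp add: mult.assoc[symmetric] mult.commute[of "vinv i"] sc_tr sc_neg_l)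
qed

lemma F_eq_al:
  assumes "X \<in> hspace d" "Y \<in> hspace d" "F X = F Y" "j < r" shows "al j X = al j Y"
  using sc_cancel[OF assms(4)] v_eig assms by metis

lemma bracket_formula:
  assumes X: "X \<in> hspace d" and Y: "Y \<in> hspace d" and i: "i < r" and j: "j < r"
  shows "bracket (lmult (v i) (F X)) (lmult (vinv j) (F Y))
       = (\<lambda>b. v i * vinv j * F (\<lambda>k. (- al j X) * Y k + (- al i Y) * X k) b)"
proof
  fix b
  have "bracket (lmult (v i) (F X)) (lmult (vinv j) (F Y)) b
      = v i * F X (vinv j * F Y b) - vinv j * F Y (v i * F X b)"
    unfolding bracket_def lmult_def by simp
  also have "\<dots> = v i * (vinv j * F X (F Y b) + sc (- al j X) (vinv j) * F Y b)
       - vinv j * (v i * F Y (F X b) + sc (al i Y) (v i) * F X b)"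
    using der_mult[OF X] der_mult[OF Y] F_vinv[OF X j] v_eig Y i by simp
  also have "\<dots> = v i * vinv j * (sc (- al j X) (F Y b) + sc (- al i Y) (F X b))"
    using F_comm[OF X Y, of b]
    by (simp add: sc_tl sc_tr sc_neg_l algebra_simps)
  also have "\<dots> = v i * vinv j * F (\<lambda>k. (- al j X) * Y k + (- al i Y) * X k) b"
  proof -
    have e: "F (\<lambda>k. (- al j X) * Y k + (- al i Y) * X k) b = sc (- al j X) (F Y b) + sc (- al i Y) (F X b)"
      by (rule F_lin[OF Y X])
    show ?thesis by (simp only: e)
  qed
  finally show "bracket (lmult (v i) (F X)) (lmult (vinv j) (F Y)) b
       = v i * vinv j * F (\<lambda>k. (- al j X) * Y k + (- al i Y) * X k) b" .
qed

lemma F_sum: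
  assumes "finite I"
  shows "(\<forall>i\<in>I. X i \<in> hspace d) \<Longrightarrow> F (\<lambda>k. \<Sum>i\<in>I. X i k) b = (\<Sum>i\<in>I. F (X i) b)"
  using assms
proof (induction I rule: finite_induct)
  case empty then show ?case using F_zero by simp
next
  case (insert x I)
  have h: "(\<lambda>k. \<Sum>i\<in>I. X i k) \<in> hspace d" using insert.prems by (auto simp: hspace_def)
  have IH: "F (\<lambda>k. \<Sum>i\<in>I. X i k) b = (\<Sum>i\<in>I. F (X i) b)" using insert.IH insert.prems by simp
  have "F (\<lambda>k. \<Sum>i\<in>insert x I. X i k) b = F (\<lambda>k. X x k + (\<Sum>i\<in>I. X i k)) b"
    using insert.hyps by simp
  also have "\<dots> = F (X x) b + F (\<lambda>k. \<Sum>i\<in>I. X i k) b"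
    using F_add[OF _ h] insert.prems by simp
  finally show ?case using insert.hyps IH by simp
qed

lemma main:
  fixes N :: "nat \<Rightarrow> nat \<Rightarrow> int" and A B :: "nat \<Rightarrow> nat \<Rightarrow> complex"
  assumes rd: "r \<le> d"
    and diag: "\<forall>i<r. N i i = 2"
    and alpha_H: "\<forall>i<r. \<forall>j<r. al j (hbasis i) = of_int (N i j)"
    and A: "\<forall>i<r. A i \<in> hspace d" and B: "\<forall>i<r. B i \<in> hspace d"
    and cii: "\<forall>i<r. bracket (lmult (v i) (F (A i))) (lmult (vinv i) (F (B i))) = F (hbasis i)"
    and cij: "\<forall>i<r. \<forall>j<r. i \<noteq> j \<longrightarrow> bracket (lmult (v i) (F (A i))) (lmult (vinv j) (F (B j))) = (\<lambda>x. 0)"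
  shows "\<exists>P. (\<forall>i<r. \<forall>j<r. N i j = (if i = j then 2 else 0) - of_bool (P i j) - of_bool (P j i))
     \<and> (\<forall>i<r. \<forall>j<r. \<forall>k<r. P i j \<and> P i k \<longrightarrow> j = k)
     \<and> (\<forall>i<r. \<forall>j<r. \<forall>k<r. P i k \<and> P j k \<longrightarrow> i = j)
     \<and> ((\<forall>j<r. \<exists>i<r. P i j) \<longrightarrow> (\<forall>b. F (\<lambda>k. \<Sum>i<r. hbasis i k) b = 0))"
proof -
  define p where "p i = al i (A i)" for i
  define q where "q i = al i (B i)" for i
  define C where "C i = (\<lambda>k. (- al i (A i)) * B i k + (- al i (B i)) * A i k)" for i
  define D where "D i j = (\<lambda>k. (- al j (A i)) * B j k + (- al i (B j)) * A i k)" for i j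
  have hb: "\<And>i. i < r \<Longrightarrow> hbasis i \<in> hspace d" using rd hs_basis by simp
  have FC: "F (hbasis i) = F (C i)" if i: "i < r" for i
  proof
    fix b
    have "F (hbasis i) b = v i * vinv i * F (C i) b"
      using cii bracket_formula[OF _ _ i i, of "A i" "B i"] A B i unfolding C_def by metis
    then show "F (hbasis i) b = F (C i) b" using v_inv i by simp
  qed
  have FD: "F (D i j) b = 0" if ij: "i < r" "j < r" "i \<noteq> j" for i j b
  proof -
    have "v i * vinv j * F (D i j) b = 0"
      using cij bracket_formula[OF _ _ ij(1,2), of "A i" "B j"] A B ij unfolding D_def by metis
    then have "(vinv i * v j) * (v i * vinv j * F (D i j) b) = 0" by simp
    moreover have "(vinv i * v j) * (v i * vinv j * F (D i j) b) = (v i * vinv i) * (v j * vinv j) * F (D i j) b"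
      by (simp add: algebra_simps)
    ultimately show ?thesis using v_inv ij by simp
  qed
  have Chs: "C i \<in> hspace d" if "i < r" for i unfolding C_def by (rule hs_lin) (use A B that in auto)
  have Dhs: "D i j \<in> hspace d" if "i < r" "j < r" for i j unfolding D_def by (rule hs_lin) (use A B that in auto)
  have pq: "p i * q i = -1" if i: "i < r" for i
  proof -
    have "al i (hbasis i) = al i (C i)" using F_eq_al[OF hb[OF i] Chs[OF i] FC[OF i] i] .
    moreover have "al i (hbasis i) = 2" using alpha_H diag i by simp
    moreover have "al i (C i) = - 2 * (p i * q i)" unfolding C_def p_def q_def al_lin by simp
    ultimately have "- (2 * (p i * q i)) = 2" by simp
    then have h: "2 * (p i * q i) = - 2" by (metis minus_equation_iff)
    have "p i * q i = (2 * (p i * q i)) / 2" by simp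
    also have "\<dots> = -1" using h by simp
    finally show ?thesis .
  qed
  have p0: "p i \<noteq> 0" if "i < r" for i using pq[OF that] by auto
  define u where "u i = (\<lambda>k. (1 / p i) * A i k)" for i
  define w where "w i = (\<lambda>k. p i * B i k)" for i
  have uhs: "u i \<in> hspace d" if "i < r" for i unfolding u_def by (rule hs_scale) (use A that in auto)
  have whs: "w i \<in> hspace d" if "i < r" for i unfolding w_def by (rule hs_scale) (use B that in auto)
  have auu: "al i (u i) = 1" if "i < r" for i using p0[OF that] unfolding u_def al_scale p_def by simp
  have aww: "al i (w i) = -1" if "i < r" for i using pq[OF that] unfolding w_def al_scale q_def by simp
  have Cuw: "C i = (\<lambda>k. u i k - w i k)" if i: "i < r" for i
  proof
    fix k
    have e: "p i * (q i * A i k) = - A i k" using pq[OF i] by (simp add: mult.assoc[symmetric])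
    show "C i k = u i k - w i k" unfolding C_def u_def w_def p_def[symmetric] q_def[symmetric]
      using p0[OF i] e by (simp add: field_simps)
  qed
  have Fh: "F (hbasis i) = F (\<lambda>k. u i k - w i k)" if "i < r" for i using FC[OF that] Cuw[OF that] by simp
  define G where "G i j = (\<lambda>k. al j (u i) * w j k + al i (w j) * u i k)" for i j
  have Ghs: "G i j \<in> hspace d" if "i < r" "j < r" for i j unfolding G_def by (rule hs_lin) (use uhs whs that in auto)
  have FG: "F (G i j) b = 0" if ij: "i < r" "j < r" "i \<noteq> j" for i j b
  proof -
    have "G i j = (\<lambda>k. (- (p j / p i)) * D i j k)"
    proof
      fix k
      have "al j (u i) = al j (A i) / p i" unfolding u_def al_scale by simp
      moreover have "al i (w j) = p j * al i (B j)" unfolding w_def al_scale by simp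
      ultimately show "G i j k = (- (p j / p i)) * D i j k"
        unfolding G_def D_def u_def w_def using p0[OF ij(1)] p0[OF ij(2)] by (simp add: field_simps)
    qed
    then have "F (G i j) b = F (\<lambda>k. (- (p j / p i)) * D i j k) b" by (simp only:)
    also have "\<dots> = sc (- (p j / p i)) (F (D i j) b)" by (rule F_scale[OF Dhs[OF ij(1,2)]])
    finally have "F (G i j) b = sc (- (p j / p i)) (F (D i j) b)" .
    then show ?thesis using FD[OF ij] sc_zero_r by simp
  qed
  have dich: "(al j (u i) = 0 \<and> al i (w j) = 0) \<or> (al j (u i) = -1 \<and> al i (w j) = 1 \<and> F (u i) = F (w j))"
    if ij: "i < r" "j < r" "i \<noteq> j" for i j
  proof -
    define m where "m = al j (u i)"
    define n where "n = al i (w j)"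
    have FG0: "F (G i j) = F (\<lambda>k. 0)" using FG[OF ij] F_zero by auto
    have "al i (G i j) = al i (\<lambda>k. 0)" by (rule F_eq_al[OF Ghs[OF ij(1,2)] hs_zero FG0 ij(1)])
    then have e1: "m * n + n = 0" unfolding G_def al_lin al_zero m_def n_def using auu[OF ij(1)] by (simp add: algebra_simps)
    have "al j (G i j) = al j (\<lambda>k. 0)" by (rule F_eq_al[OF Ghs[OF ij(1,2)] hs_zero FG0 ij(2)])
    then have e2: "- m + n * m = 0" unfolding G_def al_lin al_zero m_def n_def using aww[OF ij(2)] by (simp add: algebra_simps)
    show ?thesis
    proof (cases "n = 0")
      case True
      then have "m = 0" using e2 by simp
      then show ?thesis using True m_def n_def by simp
    next
      case False
      have "(m + 1) * n = 0" using e1 by (simp add: algebra_simps)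
      then have "m + 1 = 0" using False by simp
      then have m1: "m = -1" by (simp add: eq_neg_iff_add_eq_0)
      then have n1: "n = 1" using e2 by simp
      have "F (u i) = F (w j)"
      proof
        fix b
        have "G i j = (\<lambda>k. u i k - w j k)" unfolding G_def using m1 n1 m_def n_def by (auto simp: algebra_simps)
        then have "F (\<lambda>k. u i k - w j k) b = 0" using FG[OF ij] by simp
        then show "F (u i) b = F (w j) b" using F_diff[OF uhs[OF ij(1)] whs[OF ij(2)]] by simp
      qed
      then show ?thesis using m1 n1 m_def n_def by simp
    qed
  qed
  define P where "P i j = (i < r \<and> j < r \<and> i \<noteq> j \<and> al j (u i) = -1)" for i j
  have aui: "al j (u i) = (if P i j then -1 else 0)" if "i < r" "j < r" "i \<noteq> j" for i j
    using dich[OF that] unfolding P_def using that by auto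
  have awi: "al i (w j) = (if P i j then 1 else 0)" if "i < r" "j < r" "i \<noteq> j" for i j
    using dich[OF that] unfolding P_def using that by auto
  have Puw: "F (u i) = F (w j)" if "P i j" for i j
    using dich[of i j] that unfolding P_def by auto
  have NP: "\<forall>i<r. \<forall>j<r. N i j = (if i = j then 2 else 0) - of_bool (P i j) - of_bool (P j i)"
  proof (intro allI impI)
    fix i j assume i: "i < r" and j: "j < r"
    have "of_int (N i j) = al j (hbasis i)" using alpha_H i j by simp
    also have "\<dots> = al j (\<lambda>k. u i k - w i k)"
      using F_eq_al[OF hb[OF i] _ Fh[OF i] j] uhs[OF i] whs[OF i] by (simp add: hspace_def)
    also have "\<dots> = al j (u i) - al j (w i)" by (rule al_diff)
    also have "\<dots> = of_int ((if i = j then 2 else 0) - of_bool (P i j) - of_bool (P j i))"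
    proof (cases "i = j")
      case True
      then show ?thesis using auu[OF i] aww[OF i] unfolding P_def by simp
    next
      case False
      then show ?thesis using aui[OF i j False] awi[OF j i] False by (simp add: eq_commute[of j i])
    qed
    finally show "N i j = (if i = j then 2 else 0) - of_bool (P i j) - of_bool (P j i)"
      by (simp only: of_int_eq_iff)
  qed
  have outu: "\<forall>i<r. \<forall>j<r. \<forall>k<r. P i j \<and> P i k \<longrightarrow> j = k"
  proof (intro allI impI; elim conjE)
    fix i j k assume ijk: "i < r" "j < r" "k < r" and P1: "P i j" and P2: "P i k"
    show "j = k"
    proof (rule ccontr)
      assume jk: "j \<noteq> k"
      have "F (w j) = F (w k)" using Puw[OF P1] Puw[OF P2] by simp
      then have "al j (w j) = al j (w k)" using F_eq_al whs ijk by blast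
      then show False using aww[OF ijk(2)] awi[OF ijk(2) ijk(3) jk] by (simp split: if_splits)
    qed
  qed
  have inu: "\<forall>i<r. \<forall>j<r. \<forall>k<r. P i k \<and> P j k \<longrightarrow> i = j"
  proof (intro allI impI; elim conjE)
    fix i j k assume ijk: "i < r" "j < r" "k < r" and P1: "P i k" and P2: "P j k"
    show "i = j"
    proof (rule ccontr)
      assume ij: "i \<noteq> j"
      have "F (u i) = F (u j)" using Puw[OF P1] Puw[OF P2] by simp
      then have "al j (u i) = al j (u j)" using F_eq_al uhs ijk by blast
      then show False using auu[OF ijk(2)] aui[OF ijk(1) ijk(2) ij] by (simp split: if_splits)
    qed
  qed
  have cyc: "\<forall>b. F (\<lambda>k. \<Sum>i<r. hbasis i k) b = 0" if allp: "\<forall>j<r. \<exists>i<r. P i j"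
  proof
    fix b
    define pr where "pr j = (SOME i. i < r \<and> P i j)" for j
    have prp: "pr j < r \<and> P (pr j) j" if "j < r" for j
      unfolding pr_def using someI_ex[of "\<lambda>i. i < r \<and> P i j"] allp that by blast
    have inj: "inj_on pr {..<r}"
    proof (rule inj_onI)
      fix j k assume "j \<in> {..<r}" "k \<in> {..<r}" "pr j = pr k"
      then show "j = k" using prp outu by (metis lessThan_iff)
    qed
    have img: "pr ` {..<r} = {..<r}"
      using endo_inj_surj[OF finite_lessThan _ inj] prp by auto
    have "F (\<lambda>k. \<Sum>i<r. hbasis i k) b = (\<Sum>i<r. F (hbasis i) b)"
      using F_sum[of "{..<r}" hbasis b] hb by auto
    also have "\<dots> = (\<Sum>i<r. F (u i) b - F (w i) b)"
      using Fh F_diff uhs whs by (intro sum.cong refl) simp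
    also have "\<dots> = (\<Sum>i<r. F (u i) b) - (\<Sum>j<r. F (w j) b)" by (simp add: sum_subtractf)
    also have "(\<Sum>j<r. F (w j) b) = (\<Sum>j<r. F (u (pr j)) b)"
      using prp Puw by (intro sum.cong refl) (metis lessThan_iff)
    also have "\<dots> = (\<Sum>i\<in>pr ` {..<r}. F (u i) b)" by (rule sum.reindex[OF inj, symmetric, unfolded comp_def])
    also have "\<dots> = (\<Sum>i<r. F (u i) b)" using img by simp
    finally show "F (\<lambda>k. \<Sum>i<r. hbasis i k) b = 0" by simp
  qed
  show ?thesis using NP outu inu cyc by blast
qed

end


lemma (in alg_setting) cols_indep:
  assumes ai: "\<forall>c :: nat \<Rightarrow> complex.
        (\<forall>H\<in>hspace d. (\<Sum>j<r. c j * lin_fun d (acoef j) H) = 0) \<longrightarrow> (\<forall>j<r. c j = 0)"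
    and z: "\<forall>l<d. (\<Sum>j<r. c j * acoef j l) = 0"
  shows "\<forall>j<r. c j = 0"
proof -
  have "\<forall>H\<in>hspace d. (\<Sum>j<r. c j * lin_fun d (acoef j) H) = 0"
  proof
    fix H :: "nat \<Rightarrow> complex"
    have "(\<Sum>j<r. c j * lin_fun d (acoef j) H) = (\<Sum>j<r. \<Sum>k<d. H k * (c j * acoef j k))"
      unfolding lin_fun_def by (simp add: sum_distrib_left algebra_simps)
    also have "\<dots> = (\<Sum>k<d. \<Sum>j<r. H k * (c j * acoef j k))" by (rule sum.swap)
    also have "\<dots> = (\<Sum>k<d. H k * (\<Sum>j<r. c j * acoef j k))" by (simp add: sum_distrib_left)
    also have "\<dots> = 0" using z by simp
    finally show "(\<Sum>j<r. c j * lin_fun d (acoef j) H) = 0" .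
  qed
  then show ?thesis using ai by blast
qed

theorem corollary3p10:
  fixes r :: nat and N :: "nat \<Rightarrow> nat \<Rightarrow> int"
    and acoef :: "nat \<Rightarrow> nat \<Rightarrow> complex"
    and sc :: "complex \<Rightarrow> 'a::comm_ring_1 \<Rightarrow> 'a"
    and F :: "(nat \<Rightarrow> complex) \<Rightarrow> 'a \<Rightarrow> 'a"
    and v vinv :: "nat \<Rightarrow> 'a"
  assumes gcm: "gen_cartan r N"
    and indec: "indecomposable r N"
    and alpha_H: "\<forall>i<r. \<forall>j<r.
        lin_fun (r + corank r N) (acoef j) (hbasis i) = of_int (N i j)"
    and alpha_indep: "\<forall>c :: nat \<Rightarrow> complex.
        (\<forall>H\<in>hspace (r + corank r N).
            (\<Sum>j<r. c j * lin_fun (r + corank r N) (acoef j) H) = 0)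
        \<longrightarrow> (\<forall>j<r. c j = 0)"
    and alg: "complex_comm_algebra sc"
    and Fhom: "lie_hom_h (r + corank r N) sc F"
    and v_inv: "\<forall>i<r. v i * vinv i = 1"
    and v_eig: "\<forall>H\<in>hspace (r + corank r N). \<forall>i<r.
        F H (v i) = sc (lin_fun (r + corank r N) (acoef i) H) (v i)"
    and problem2: "\<exists>\<delta>p \<delta>m :: nat \<Rightarrow> 'a \<Rightarrow> 'a.
        (\<forall>i<r. \<delta>p i \<in> F ` hspace (r + corank r N)
               \<and> \<delta>m i \<in> F ` hspace (r + corank r N)) \<and>
        (\<forall>a<r + corank r N. \<forall>b<r + corank r N.
            bracket (F (hbasis a)) (F (hbasis b)) = (\<lambda>x. 0)) \<and>
        (\<forall>i<r. bracket (lmult (v i) (\<delta>p i)) (lmult (vinv i) (\<delta>m i))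
               = F (hbasis i)) \<and>
        (\<forall>i<r. \<forall>j<r. i \<noteq> j \<longrightarrow>
            bracket (lmult (v i) (\<delta>p i)) (lmult (vinv j) (\<delta>m j)) = (\<lambda>x. 0)) \<and>
        (\<forall>a<r + corank r N. \<forall>j<r.
            bracket (F (hbasis a)) (lmult (v j) (\<delta>p j))
              = (\<lambda>x. sc (lin_fun (r + corank r N) (acoef j) (hbasis a))
                         (lmult (v j) (\<delta>p j) x)) \<and>
            bracket (F (hbasis a)) (lmult (vinv j) (\<delta>m j))
              = (\<lambda>x. sc (- lin_fun (r + corank r N) (acoef j) (hbasis a))
                         (lmult (vinv j) (\<delta>m j) x)))"
  shows "{H \<in> hspace (r + corank r N). F H = (\<lambda>x. 0)}
       = {H \<in> hspace (r + corank r N). \<forall>i<r. lin_fun (r + corank r N) (acoef i) H = 0}"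
proof -
  define d where "d = r + corank r N"
  have alpha_H': "\<forall>i<r. \<forall>j<r. lin_fun d (acoef j) (hbasis i) = of_int (N i j)" using alpha_H d_def by simp
  have alpha_indep': "\<forall>c :: nat \<Rightarrow> complex.
        (\<forall>H\<in>hspace d. (\<Sum>j<r. c j * lin_fun d (acoef j) H) = 0) \<longrightarrow> (\<forall>j<r. c j = 0)"
    using alpha_indep d_def by simp
  interpret S: alg_setting d r acoef sc F v vinv
    using alg Fhom v_inv v_eig d_def by unfold_locales simp_all
  obtain dp dm :: "nat \<Rightarrow> 'a \<Rightarrow> 'a" where
    pr1: "\<forall>i<r. dp i \<in> F ` hspace d \<and> dm i \<in> F ` hspace d"
    and pr3: "\<forall>i<r. bracket (lmult (v i) (dp i)) (lmult (vinv i) (dm i)) = F (hbasis i)"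
    and pr4: "\<forall>i<r. \<forall>j<r. i \<noteq> j \<longrightarrow> bracket (lmult (v i) (dp i)) (lmult (vinv j) (dm j)) = (\<lambda>x. 0)"
    using problem2 d_def by blast
  have "\<forall>i\<in>{..<r}. \<exists>X. X \<in> hspace d \<and> dp i = F X" using pr1 by blast
  then obtain A where A: "\<forall>i\<in>{..<r}. A i \<in> hspace d \<and> dp i = F (A i)" by (metis bchoice)
  have "\<forall>i\<in>{..<r}. \<exists>X. X \<in> hspace d \<and> dm i = F X" using pr1 by blast
  then obtain B where B: "\<forall>i\<in>{..<r}. B i \<in> hspace d \<and> dm i = F (B i)" by (metis bchoice)
  have diag: "\<forall>i<r. N i i = 2" using gcm unfolding gen_cartan_def by blast
  have "\<exists>P. (\<forall>i<r. \<forall>j<r. N i j = (if i = j then 2 else 0) - of_bool (P i j) - of_bool (P j i))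
     \<and> (\<forall>i<r. \<forall>j<r. \<forall>k<r. P i j \<and> P i k \<longrightarrow> j = k)
     \<and> (\<forall>i<r. \<forall>j<r. \<forall>k<r. P i k \<and> P j k \<longrightarrow> i = j)
     \<and> ((\<forall>j<r. \<exists>i<r. P i j) \<longrightarrow> (\<forall>b. F (\<lambda>k. \<Sum>i<r. hbasis i k) b = 0))"
  proof (rule S.main[OF _ diag alpha_H'])
    show "r \<le> d" unfolding d_def by simp
    show "\<forall>i<r. A i \<in> hspace d" using A by simp
    show "\<forall>i<r. B i \<in> hspace d" using B by simp
    show "\<forall>i<r. bracket (lmult (v i) (F (A i))) (lmult (vinv i) (F (B i))) = F (hbasis i)"
      using A B pr3 by simp
    show "\<forall>i<r. \<forall>j<r. i \<noteq> j \<longrightarrow> bracket (lmult (v i) (F (A i))) (lmult (vinv j) (F (B j))) = (\<lambda>x. 0)"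
      using A B pr4 by simp
  qed
  then obtain P where NP: "\<forall>i<r. \<forall>j<r. N i j = (if i = j then 2 else 0) - of_bool (P i j) - of_bool (P j i)"
    and outu: "\<forall>i<r. \<forall>j<r. \<forall>k<r. P i j \<and> P i k \<longrightarrow> j = k"
    and inu: "\<forall>i<r. \<forall>j<r. \<forall>k<r. P i k \<and> P j k \<longrightarrow> i = j"
    and cyc: "(\<forall>j<r. \<exists>i<r. P i j) \<longrightarrow> (\<forall>b. F (\<lambda>k. \<Sum>i<r. hbasis i k) b = 0)"
    by blast
  have cr: "corank r N \<le> 1" by (rule rank_lower[OF complex_kernel_NJ[OF NP outu inu indec]])
  have Fz: "F (\<lambda>k. 0) = (\<lambda>x. 0)" using S.F_zero by auto
  have sub1: "{H \<in> hspace d. F H = (\<lambda>x. 0)} \<subseteq> {H \<in> hspace d. \<forall>i<r. lin_fun d (acoef i) H = 0}"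
  proof safe
    fix H i assume H: "H \<in> hspace d" "F H = (\<lambda>x. 0)" and i: "i < r"
    have "lin_fun d (acoef i) H = lin_fun d (acoef i) (\<lambda>k. 0)"
      using S.F_eq_al[OF H(1) S.hs_zero _ i] H(2) Fz by simp
    then show "lin_fun d (acoef i) H = 0" using S.al_zero by simp
  qed
  have sub2: "{H \<in> hspace d. \<forall>i<r. lin_fun d (acoef i) H = 0} \<subseteq> {H \<in> hspace d. F H = (\<lambda>x. 0)}"
  proof safe
    fix H assume H: "H \<in> hspace d" and Z: "\<forall>i<r. lin_fun d (acoef i) H = 0"
    have Hal: "lin_fun d (acoef j) H = (\<Sum>l<d. acoef j l * H l)" for j
      unfolding lin_fun_def by (simp add: mult.commute)
    show "F H = (\<lambda>x. 0)"
    proof (cases "corank r N = 0")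
      case True
      then have dr: "d = r" unfolding d_def by simp
      have "\<forall>l<d. H l = 0"
      proof (rule inj_transfer[of d acoef H])
        show "\<forall>c. (\<forall>l<d. (\<Sum>j<d. c j * acoef j l) = 0) \<longrightarrow> (\<forall>j<d. c j = 0)"
          using S.cols_indep[OF alpha_indep'] dr by simp
        show "\<forall>j<d. (\<Sum>l<d. acoef j l * H l) = 0" using Z dr Hal by simp
      qed
      then have h0: "\<forall>l<d. H l = 0" .
      have "H = (\<lambda>k. 0)"
      proof
        fix k show "H k = 0" using h0 H by (cases "k < d") (auto simp: hspace_def)
      qed
      then show ?thesis using Fz by simp
    next
      case False
      then have c1: "corank r N = 1" using cr by simp
      then have dr: "d = Suc r" unfolding d_def by simp
      have r0: "0 < r"
      proof (rule ccontr)
        assume "\<not> 0 < r"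
        then have "r = 0" by simp
        then show False using c1 unfolding corank_def by simp
      qed
      define Hs where "Hs = (\<lambda>k. \<Sum>i<r. hbasis i k)"
      have FHs: "\<forall>b. F Hs b = 0" using cyc kernel_cycle[OF NP outu inu indec False] unfolding Hs_def by blast
      then have "F Hs = (\<lambda>x. 0)" by (intro ext) simp
      then have FHs': "F Hs = F (\<lambda>k. 0)" using Fz by (simp only:)
      have Hsk: "Hs k = (if k < r then 1 else 0)" for k
        unfolding Hs_def hbasis_def by (cases "k < r") auto
      have Hshs: "Hs \<in> hspace d" unfolding hspace_def Hsk dr by simp
      have Hs0: "Hs 0 = 1" using Hsk r0 by simp
      have aHs: "lin_fun d (acoef j) Hs = 0" if "j < r" for j
        using S.F_eq_al[OF Hshs S.hs_zero FHs' that] S.al_zero by simp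
      define f where "f j l = (if j < r then acoef j l else if l = 0 then 1 else 0)" for j l
      define H' where "H' = (\<lambda>l. H l - H 0 * Hs l)"
      have "\<forall>l<d. H' l = 0"
      proof (rule inj_transfer[of d f H'])
        show "\<forall>c. (\<forall>l<d. (\<Sum>j<d. c j * f j l) = 0) \<longrightarrow> (\<forall>j<d. c j = 0)"
        proof (intro allI impI)
          fix c :: "nat \<Rightarrow> complex" and j
          assume hc: "\<forall>l<d. (\<Sum>j<d. c j * f j l) = 0" and j: "j < d"
          define g where "g l = (\<Sum>j<r. c j * acoef j l)" for l
          have hc': "g l + c r * (if l = 0 then 1 else 0) = 0" if "l < d" for l
          proof -
            have "(\<Sum>j<d. c j * f j l) = g l + c r * (if l = 0 then 1 else 0)"
              unfolding dr g_def f_def by (simp add: lessThan_Suc)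
            then show ?thesis using hc that by simp
          qed
          have "(\<Sum>l<d. Hs l * (g l + c r * (if l = 0 then 1 else 0))) = 0"
          proof (rule sum.neutral, rule ballI)
            fix l assume "l \<in> {..<d}"
            then have "g l + c r * (if l = 0 then 1 else 0) = 0" using hc' by blast
            then show "Hs l * (g l + c r * (if l = 0 then 1 else 0)) = 0" by (simp only: mult_zero_right)
          qed
          moreover have "(\<Sum>l<d. Hs l * (g l + c r * (if l = 0 then 1 else 0)))
              = (\<Sum>l<d. Hs l * g l) + (\<Sum>l<d. if l = 0 then c r * Hs l else 0)"
          proof -
            have "(\<Sum>l<d. Hs l * (g l + c r * (if l = 0 then 1 else 0)))
              = (\<Sum>l<d. Hs l * g l + (if l = 0 then c r * Hs l else 0))"
              by (intro sum.cong refl) (simp add: algebra_simps)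
            then show ?thesis by (simp only: sum.distrib)
          qed
          moreover have "(\<Sum>l<d. if l = 0 then c r * Hs l else 0) = c r * Hs 0"
            using dr by (subst sum.delta) simp_all
          moreover have "c r * Hs 0 = c r" using Hs0 by simp
          moreover have "(\<Sum>l<d. Hs l * g l) = (\<Sum>j<r. c j * lin_fun d (acoef j) Hs)"
          proof -
            have "(\<Sum>l<d. Hs l * g l) = (\<Sum>l<d. \<Sum>j<r. Hs l * (c j * acoef j l))"
              unfolding g_def by (simp add: sum_distrib_left)
            also have "\<dots> = (\<Sum>j<r. \<Sum>l<d. Hs l * (c j * acoef j l))" by (rule sum.swap)
            also have "\<dots> = (\<Sum>j<r. c j * lin_fun d (acoef j) Hs)"
              unfolding lin_fun_def by (simp add: sum_distrib_left algebra_simps)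
            finally show ?thesis .
          qed
          moreover have "(\<Sum>j<r. c j * lin_fun d (acoef j) Hs) = 0" using aHs by simp
          ultimately have cr0: "c r = 0" by simp
          have "\<forall>l<d. g l = 0" using hc' cr0 by simp
          then have "\<forall>j<r. c j = 0" using S.cols_indep[OF alpha_indep'] unfolding g_def by blast
          moreover have "j < r \<or> j = r" using j dr by auto
          ultimately show "c j = 0" using cr0 by auto
        qed
        show "\<forall>j<d. (\<Sum>l<d. f j l * H' l) = 0"
        proof (intro allI impI)
          fix j assume j: "j < d"
          show "(\<Sum>l<d. f j l * H' l) = 0"
          proof (cases "j < r")
            case True
            have "(\<Sum>l<d. f j l * H' l) = lin_fun d (acoef j) H'"
              unfolding f_def lin_fun_def using True by (simp add: mult.commute)
            also have "\<dots> = lin_fun d (acoef j) H - H 0 * lin_fun d (acoef j) Hs"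
              unfolding H'_def lin_fun_def by (simp add: left_diff_distrib sum_subtractf sum_distrib_left mult.assoc)
            also have "\<dots> = 0" using Z True aHs by simp
            finally show ?thesis .
          next
            case False
            have "(\<Sum>l<d. f j l * H' l) = (\<Sum>l<d. if l = 0 then H' l else 0)"
              unfolding f_def using False by (intro sum.cong refl) simp
            also have "\<dots> = H' 0" using dr by simp
            also have "\<dots> = 0" unfolding H'_def using Hs0 by simp
            finally show ?thesis .
          qed
        qed
      qed
      then have h: "\<forall>l<d. H' l = 0" .
      have HH: "H = (\<lambda>k. H 0 * Hs k)"
      proof
        fix k
        show "H k = H 0 * Hs k"
        proof (cases "k < d")
          case True
          then have "H k - H 0 * Hs k = 0" using h unfolding H'_def by blast
          then show ?thesis by (simp only: right_minus_eq)
        next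
          case False
          then show ?thesis using H Hshs unfolding hspace_def by simp
        qed
      qed
      show ?thesis
      proof
        fix b
        have "F H = F (\<lambda>k. H 0 * Hs k)" using arg_cong[OF HH, of F] .
        then have "F H b = F (\<lambda>k. H 0 * Hs k) b" by (rule fun_cong)
        also have "\<dots> = sc (H 0) (F Hs b)" by (rule S.F_scale[OF Hshs])
        also have "\<dots> = 0" using FHs S.sc_zero_r by simp
        finally show "F H b = 0" .
      qed
    qed
  qed
  show ?thesis using sub1 sub2 unfolding d_def by blast
qed

end
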